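(* Let $m\ge1$, $\zeta\in\mathcal S_m$, and $\omega_0=(m,m-1,\dots,1)$ the longest element of $\mathcal S_m$. Then the map $$((\alpha_n,\beta_n),\dots,(\alpha_1,\beta_1))\longmapsto((\omega_0(\beta_n),\omega_0(\alpha_n)),\dots,(\omega_0(\beta_1),\omega_0(\alpha_1)))$$ is a bijection from $R_u(\zeta)$ to $R_u(\omega_0\zeta\omega_0)$.
   Context: $\mathcal S_\infty$ is the group of permutations of $\{1,2,\dots\}$ fixing all but finitely many points, with $\mathcal S_m\subset\mathcal S_\infty$; composition $(uv)(i)=u(v(i))$; $1$ the identity; $\ell$ the number of inversions. For $k\ge1$, $\le_k$ is the reflexive–transitive closure of covers $u\lessdot_k u(a\,b)$ with $a\le k<b$ and $\ell(u(a\,b))=\ell(u)+1$. For $\zeta\in\mathcal S_\infty$, $\ell_u(\zeta):=\ell(\zeta u)-\ell(u)$ for any $u,k$ with $u\le_k\zeta u$ (these exist and the value is independent of the choice). For $0<\alpha<\beta$, $\hat u_{\alpha\beta}$ is the linear operator on $\mathbb Q\mathcal S_\infty$ with $\hat u_{\alpha\beta}(\zeta)=(\alpha\,\beta)\zeta$ if $\ell_u((\alpha\,\beta)\zeta)=\ell_u(\zeta)+1$ and $0$ otherwise. $R_u(\zeta)$ is the set of sequences $((\alpha_n,\beta_n),\dots,(\alpha_1,\beta_1))$, $n\ge0$, with $0<\alpha_i<\beta_i$ and $\hat u_{\alpha_n\beta_n}\cdots\hat u_{\alpha_1\beta_1}(1)=\zeta$. *)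

theory Defs
  imports Complex_Main "HOL-Combinatorics.Transposition"
begin

text \<open>Permutations of the positive integers fixing all but finitely many points,
  represented as functions nat \<Rightarrow> nat that fix 0.  Composition (u v)(i) = u (v i) is u \<circ> v.\<close>

definition S_inf :: "(nat \<Rightarrow> nat) set" where
  "S_inf = {w. bij w \<and> w 0 = 0 \<and> finite {i. w i \<noteq> i}}"

definition S_m :: "nat \<Rightarrow> (nat \<Rightarrow> nat) set" where
  "S_m m = {w \<in> S_inf. \<forall>i. m < i \<longrightarrow> w i = i}"

definition len :: "(nat \<Rightarrow> nat) \<Rightarrow> nat" where
  "len w = card {(i, j). 1 \<le> i \<and> i < j \<and> w j < w i}"

definition kcover :: "nat \<Rightarrow> (nat \<Rightarrow> nat) \<Rightarrow> (nat \<Rightarrow> nat) \<Rightarrow> bool" where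
  "kcover k u v \<longleftrightarrow> u \<in> S_inf \<and> (\<exists>a b. 1 \<le> a \<and> a \<le> k \<and> k < b \<and>
      v = u \<circ> transpose a b \<and> len v = len u + 1)"

definition kbruhat :: "nat \<Rightarrow> (nat \<Rightarrow> nat) \<Rightarrow> (nat \<Rightarrow> nat) \<Rightarrow> bool" where
  "kbruhat k = (kcover k)\<^sup>*\<^sup>*"

definition ell_u :: "(nat \<Rightarrow> nat) \<Rightarrow> int" where
  "ell_u \<zeta> = (SOME n. \<exists>u k. 1 \<le> k \<and> u \<in> S_inf \<and> kbruhat k u (\<zeta> \<circ> u) \<and>
                          n = int (len (\<zeta> \<circ> u)) - int (len u))"

text \<open>Elements of the group algebra Q S_inf, as coefficient functions
  (only finitely supported ones arise).  Basis element of w:\<close>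
definition basis :: "(nat \<Rightarrow> nat) \<Rightarrow> ((nat \<Rightarrow> nat) \<Rightarrow> rat)" where
  "basis w = (\<lambda>v. if v = w then 1 else 0)"

text \<open>The linear operator \<^emph>\<open>u-hat\<close>_{\<alpha>\<beta>}: sends \<zeta> to (\<alpha> \<beta>)\<zeta> if
  \<ell>_u((\<alpha> \<beta>)\<zeta>) = \<ell>_u(\<zeta>)+1, else 0; extended linearly.\<close>
definition uhat :: "nat \<Rightarrow> nat \<Rightarrow> ((nat \<Rightarrow> nat) \<Rightarrow> rat) \<Rightarrow> ((nat \<Rightarrow> nat) \<Rightarrow> rat)" where
  "uhat \<alpha> \<beta> f = (\<lambda>w. if w \<in> S_inf \<and> ell_u w = ell_u (transpose \<alpha> \<beta> \<circ> w) + 1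
                      then f (transpose \<alpha> \<beta> \<circ> w) else 0)"

definition R_u :: "(nat \<Rightarrow> nat) \<Rightarrow> (nat \<times> nat) list set" where
  "R_u \<zeta> = {xs. (\<forall>(a, b) \<in> set xs. 0 < a \<and> a < b) \<and>
                 foldr (\<lambda>(a, b) f. uhat a b f) xs (basis id) = basis \<zeta>}"

definition w0 :: "nat \<Rightarrow> nat \<Rightarrow> nat" where
  "w0 m = (\<lambda>i. if 1 \<le> i \<and> i \<le> m then m + 1 - i else i)"

end

theory Submission
  imports Defs
begin


lemma Sinf_D: assumes "w \<in> S_inf" shows "bij w" "w 0 = 0" "finite {i. w i \<noteq> i}"
  using assms unfolding S_inf_def by auto

lemma Sinf_bound: assumes "w \<in> S_inf" obtains N where "\<forall>x>N. w x = x"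
proof -
  have "finite {i. w i \<noteq> i}" using Sinf_D[OF assms] by auto
  then obtain N where "\<forall>x\<in>{i. w i \<noteq> i}. x \<le> N" using finite_nat_set_iff_bounded_le by blast
  then show ?thesis using that by (meson leD mem_Collect_eq)
qed

lemma Sinf_comp: assumes "u \<in> S_inf" "v \<in> S_inf" shows "u \<circ> v \<in> S_inf"
proof -
  have "{i. (u \<circ> v) i \<noteq> i} \<subseteq> {i. v i \<noteq> i} \<union> {i. u i \<noteq> i}" by auto
  then show ?thesis using assms unfolding S_inf_def
    by (auto intro: bij_comp finite_subset)
qed

lemma Sinf_transpose: assumes "a \<noteq> 0" "b \<noteq> 0" shows "transpose a b \<in> S_inf"
proof -
  have "{i. transpose a b i \<noteq> i} \<subseteq> {a,b}" by (auto simp: transpose_def)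
  then show ?thesis using assms unfolding S_inf_def
    by (auto intro: finite_subset simp: bij_transpose transpose_def)
qed

lemma Sinf_inv: assumes "u \<in> S_inf" shows "inv u \<in> S_inf"
proof -
  have b: "bij u" "u 0 = 0" "finite {i. u i \<noteq> i}" using Sinf_D[OF assms] by auto
  have "{i. inv u i \<noteq> i} \<subseteq> u ` {i. u i \<noteq> i}"
  proof
    fix i assume "i \<in> {i. inv u i \<noteq> i}"
    then have "u (inv u i) = i" "inv u i \<noteq> i" using b by (auto simp: bij_is_surj surj_f_inv_f)
    then show "i \<in> u ` {i. u i \<noteq> i}" by (metis (mono_tags) image_eqI mem_Collect_eq)
  qed
  moreover have "inv u 0 = 0" using b by (metis bij_inv_eq_iff)
  ultimately show ?thesis using b unfolding S_inf_def
    by (auto intro: finite_subset bij_imp_bij_inv)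
qed

lemma Sinf_le: assumes "w \<in> S_inf" "\<forall>x>N. w x = x" "x \<le> N" shows "w x \<le> N"
proof (rule ccontr)
  assume "\<not> w x \<le> N"
  then have "w (w x) = w x" using assms(2) by auto
  then have "w x = x" using Sinf_D(1)[OF assms(1)] by (meson bij_def injD)
  then show False using \<open>\<not> w x \<le> N\<close> assms(3) by auto
qed

lemma Sinf_pos: assumes "w \<in> S_inf" "x \<ge> 1" shows "w x \<ge> 1"
proof (rule ccontr)
  assume "\<not> 1 \<le> w x" then have "w x = w 0" using Sinf_D[OF assms(1)] by auto
  then have "x = 0" using Sinf_D(1)[OF assms(1)] by (meson bij_def injD)
  then show False using assms by auto
qed

lemma Sinf_bij_betw: assumes "w \<in> S_inf" "\<forall>x>N. w x = x" shows "bij_betw w {1..N} {1..N}"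
proof -
  have inj: "inj_on w {1..N}" using Sinf_D(1)[OF assms(1)] by (meson bij_def inj_on_subset subset_UNIV)
  have "w ` {1..N} \<subseteq> {1..N}" using Sinf_le[OF assms] Sinf_pos[OF assms(1)] by auto
  then have "w ` {1..N} = {1..N}" using inj by (simp add: endo_inj_surj)
  then show ?thesis using inj by (simp add: bij_betw_def)
qed

lemma len_sum: assumes "w \<in> S_inf" "\<forall>x>N. w x = x"
  shows "int (len w) = (\<Sum>i\<in>{1..N}. \<Sum>j\<in>{1..N}. if i < j \<and> w j < w i then 1 else 0)"
proof -
  have sub: "{(i, j). 1 \<le> i \<and> i < j \<and> w j < w i} = Set.filter (\<lambda>(i,j). i < j \<and> w j < w i) ({1..N} \<times> {1..N})"
  proof (rule set_eqI, rule iffI)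
    fix p assume "p \<in> Set.filter (\<lambda>(i,j). i < j \<and> w j < w i) ({1..N} \<times> {1..N})"
    then show "p \<in> {(i, j). 1 \<le> i \<and> i < j \<and> w j < w i}" by auto
  next
    fix p assume "p \<in> {(i, j). 1 \<le> i \<and> i < j \<and> w j < w i}"
    then obtain i j where p: "p = (i,j)" and h: "1 \<le> i" "i < j" "w j < w i" by auto
    have "j \<le> N"
    proof (rule ccontr)
      assume "\<not> j \<le> N" then have "w j = j" using assms(2) by auto
      show False
      proof (cases "i \<le> N")
        case True then have "w i \<le> N" using Sinf_le[OF assms] by auto
        then show False using h \<open>w j = j\<close> \<open>\<not> j \<le> N\<close> by auto
      next
        case False then have "w i = i" using assms(2) by auto
        then show False using h \<open>w j = j\<close> by auto
      qed
    qed
    then show "p \<in> Set.filter (\<lambda>(i,j). i < j \<and> w j < w i) ({1..N} \<times> {1..N})" using h p by auto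
  qed
  have "int (len w) = int (card (Set.filter (\<lambda>(i,j). i < j \<and> w j < w i) ({1..N} \<times> {1..N})))"
    unfolding len_def sub by simp
  also have "\<dots> = (\<Sum>p\<in>Set.filter (\<lambda>(i,j). i < j \<and> w j < w i) ({1..N} \<times> {1..N}). 1)" by simp
  also have "\<dots> = (\<Sum>p\<in>{1..N} \<times> {1..N}. if (\<lambda>(i,j). i < j \<and> w j < w i) p then 1 else 0)"
    by (subst sum.inter_filter[symmetric]) auto
  also have "\<dots> = (\<Sum>i\<in>{1..N}. \<Sum>j\<in>{1..N}. if i < j \<and> w j < w i then 1 else 0)"
    by (simp add: sum.cartesian_product case_prod_beta)
  finally show ?thesis .
qed

lemma pair_split:
  fixes g :: "'a \<Rightarrow> 'a \<Rightarrow> int"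
  assumes "finite A" "a \<in> A" "b \<in> A" "a \<noteq> b"
  shows "(\<Sum>x\<in>A. \<Sum>y\<in>A. g x y) = (\<Sum>x\<in>A-{a,b}. \<Sum>y\<in>A-{a,b}. g x y)
     + (\<Sum>c\<in>A-{a,b}. g a c + g c a + g b c + g c b) + g a a + g a b + g b a + g b b"
proof -
  define S where "S = A - {a,b}"
  have A: "A = insert a (insert b S)" "a \<notin> S" "b \<notin> S" "finite S" using assms unfolding S_def by auto
  show ?thesis unfolding S_def[symmetric] 
    apply (subst A(1))+
    using A(2-4) assms(4) by (simp add: sum.distrib algebra_simps)
qed



lemma Sinf_bound2: assumes "u \<in> S_inf" obtains N where "\<forall>x>N. u x = x" "M \<le> N"
proof -
  obtain N where "\<forall>x>N. u x = x" using Sinf_bound[OF assms] by blast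
  then show ?thesis using that[of "max N M"] by auto
qed

lemma len_transpose:
  assumes u: "u \<in> S_inf" and ab: "1 \<le> a" "a < b"
  shows "int (len (u \<circ> transpose a b)) = int (len u) + (if u a < u b then 1 else -1)
     + 2 * int (card {c. a<c \<and> c<b \<and> u a < u c \<and> u c < u b})
     - 2 * int (card {c. a<c \<and> c<b \<and> u b < u c \<and> u c < u a})"
proof -
  obtain N where N: "\<forall>x>N. u x = x" "b \<le> N" using Sinf_bound2[OF u] by blast
  define v where "v = u \<circ> transpose a b"
  have v: "v \<in> S_inf" unfolding v_def using ab by (intro Sinf_comp u Sinf_transpose) auto
  have vN: "\<forall>x>N. v x = x" using N ab unfolding v_def by (auto simp: transpose_def)
  have inj: "inj u" using Sinf_D(1)[OF u] bij_def by auto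
  have uab: "u a \<noteq> u b" using inj ab by (metis injD less_irrefl)
  define f where "f (w::nat\<Rightarrow>nat) i j = (if i < j \<and> w j < w (i::nat) then 1 else (0::int))" for w i j
  define S where "S = {1..N} - {a,b}"
  have A: "finite {1..N}" "a \<in> {1..N}" "b \<in> {1..N}" "a \<noteq> b" using ab N by auto
  have Lu: "int (len u) = (\<Sum>x\<in>{1..N}. \<Sum>y\<in>{1..N}. f u x y)" unfolding f_def using len_sum[OF u N(1)] by simp
  have Lv: "int (len v) = (\<Sum>x\<in>{1..N}. \<Sum>y\<in>{1..N}. f v x y)" unfolding f_def using len_sum[OF v vN] by simp
  have same: "(\<Sum>x\<in>S. \<Sum>y\<in>S. f v x y) = (\<Sum>x\<in>S. \<Sum>y\<in>S. f u x y)"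
    unfolding S_def f_def v_def by (intro sum.cong refl) (auto simp: transpose_def)
  define C1 where "C1 = {c. a<c \<and> c<b \<and> u a < u c \<and> u c < u b}"
  define C2 where "C2 = {c. a<c \<and> c<b \<and> u b < u c \<and> u c < u a}"
  have pt: "f v a c + f v c a + f v b c + f v c b = f u a c + f u c a + f u b c + f u c b
       + 2 * (if c \<in> C1 then 1 else 0) - 2 * (if c \<in> C2 then 1 else 0)" if "c \<in> S" for c
  proof -
    have c: "c \<noteq> a" "c \<noteq> b" using that S_def by auto
    then have "v c = u c" "v a = u b" "v b = u a" unfolding v_def by (auto simp: transpose_def)
    moreover have "u c \<noteq> u a" "u c \<noteq> u b" using c inj by (metis injD)+
    ultimately show ?thesis unfolding f_def C1_def C2_def using ab uab by auto
  qed
  have C1S: "C1 \<subseteq> S" "C2 \<subseteq> S" unfolding C1_def C2_def S_def using ab N by auto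
  have fS: "finite S" unfolding S_def by auto
  have sC0: "(\<Sum>c\<in>S. if c \<in> C then 1 else 0) = int (card C)" if "C \<subseteq> S" for C
    using that fS by (simp add: sum.If_cases Int_absorb1)
  have sC: "(\<Sum>c\<in>S. 2 * (if c \<in> C then 1 else 0)) = 2 * int (card C)" if "C \<subseteq> S" for C
    using sC0[OF that] by (simp add: sum_distrib_left[symmetric])
  have "(\<Sum>c\<in>S. f v a c + f v c a + f v b c + f v c b) = (\<Sum>c\<in>S. f u a c + f u c a + f u b c + f u c b)
      + 2 * int (card C1) - 2 * int (card C2)"
    using sum.cong[OF refl pt, of S] C1S sC by (simp add: sum.distrib sum_subtractf sum_distrib_left)
  moreover have "f v a a + f v a b + f v b a + f v b b = f u a a + f u a b + f u b a + f u b b + (if u a < u b then 1 else -1)"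
    unfolding f_def v_def using ab uab by (auto simp: transpose_def)
  ultimately have "int (len v) = int (len u) + (if u a < u b then 1 else -1) + 2 * int (card C1) - 2 * int (card C2)"
    unfolding Lu Lv pair_split[OF A, of "f v"] pair_split[OF A, of "f u"] S_def[symmetric] same by simp
  then show ?thesis unfolding v_def C1_def C2_def .
qed

lemma len_transpose_cover:
  assumes u: "u \<in> S_inf" and ab: "1 \<le> a" "a < b"
  shows "len (u \<circ> transpose a b) = len u + 1 \<longleftrightarrow> u a < u b \<and> (\<forall>c. a < c \<and> c < b \<longrightarrow> \<not> (u a < u c \<and> u c < u b))"
proof -
  have fin: "finite {c. a<c \<and> c<b \<and> P c}" for P by (rule finite_subset[of _ "{..b}"]) auto
  have e: "{c. a<c \<and> c<b \<and> u b < u c \<and> u c < u a} = {}" if "u a < u b" using that by auto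
  have e2: "{c. a<c \<and> c<b \<and> u a < u c \<and> u c < u b} = {}" if "\<not> u a < u b" using that by auto
  show ?thesis
  proof (cases "u a < u b")
    case True
    define C where "C = {c. a<c \<and> c<b \<and> u a < u c \<and> u c < u b}"
    have eq: "int (len (u \<circ> transpose a b)) = int (len u) + 1 + 2 * int (card C)"
      using len_transpose[OF assms] e[OF True] True unfolding C_def by auto
    have "len (u \<circ> transpose a b) = len u + 1 \<longleftrightarrow> card {c. a<c \<and> c<b \<and> u a < u c \<and> u c < u b} = 0"
      unfolding C_def[symmetric] using eq by arith
    also have "\<dots> \<longleftrightarrow> {c. a<c \<and> c<b \<and> u a < u c \<and> u c < u b} = {}"
      using fin[of "\<lambda>c. u a < u c \<and> u c < u b"] by simp
    finally show ?thesis using True by auto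
  next
    case False
    then show ?thesis using len_transpose[OF assms] e2[OF False] by auto
  qed
qed



definition condA :: "nat \<Rightarrow> (nat \<Rightarrow> nat) \<Rightarrow> (nat \<Rightarrow> nat) \<Rightarrow> bool" where
  "condA k u w \<longleftrightarrow> (\<forall>i. (1 \<le> i \<and> i \<le> k \<longrightarrow> u i \<le> w i) \<and> (k < i \<longrightarrow> w i \<le> u i))"

definition condB :: "nat \<Rightarrow> (nat \<Rightarrow> nat) \<Rightarrow> (nat \<Rightarrow> nat) \<Rightarrow> bool" where
  "condB k u w \<longleftrightarrow> (\<forall>i j. 1 \<le> i \<and> i < j \<and> (j \<le> k \<or> k < i) \<and> u i < u j \<longrightarrow> w i < w j)"

lemma Sinf_inj: "w \<in> S_inf \<Longrightarrow> w x = w y \<longleftrightarrow> x = y"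
  using Sinf_D(1) by (metis bij_def injD)

lemma kcover_step:
  assumes "kcover k w w'" 
  obtains a b where "w \<in> S_inf" "1 \<le> a" "a \<le> k" "k < b" "w' = w \<circ> transpose a b"
    "w a < w b" "\<forall>c. a < c \<and> c < b \<longrightarrow> \<not> (w a < w c \<and> w c < w b)"
proof -
  obtain a b where h: "w \<in> S_inf" "1 \<le> a" "a \<le> k" "k < b" "w' = w \<circ> transpose a b" "len w' = len w + 1"
    using assms unfolding kcover_def by blast
  then have "w a < w b \<and> (\<forall>c. a < c \<and> c < b \<longrightarrow> \<not> (w a < w c \<and> w c < w b))"
    using len_transpose_cover[of w a b] by auto
  then show ?thesis using that h by blast
qed

lemma kbruhat_cond:
  assumes "kbruhat k u w" "u \<in> S_inf"
  shows "w \<in> S_inf \<and> condA k u w \<and> condB k u w"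
  using assms(1) unfolding kbruhat_def
proof (induction rule: rtranclp_induct)
  case base
  then show ?case using assms(2) unfolding condA_def condB_def by auto
next
  case (step w w')
  obtain a b where ab: "w \<in> S_inf" "1 \<le> a" "a \<le> k" "k < b" "w' = w \<circ> transpose a b"
    "w a < w b" "\<forall>c. a < c \<and> c < b \<longrightarrow> \<not> (w a < w c \<and> w c < w b)"
    using kcover_step[OF step.hyps(2)] by blast
  have IA: "condA k u w" and IB: "condB k u w" using step.IH by auto
  have w'a: "w' a = w b" and w'b: "w' b = w a" and w'c: "\<And>c. c \<noteq> a \<Longrightarrow> c \<noteq> b \<Longrightarrow> w' c = w c"
    using ab(5) by (auto simp: transpose_def)
  have S: "w' \<in> S_inf" using ab by (auto intro!: Sinf_comp Sinf_transpose)
  have A: "condA k u w'" unfolding condA_def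
  proof (intro allI conjI impI)
    fix i assume i: "1 \<le> i \<and> i \<le> k"
    show "u i \<le> w' i"
    proof (cases "i = a")
      case True then show ?thesis using IA ab w'a i unfolding condA_def by (metis less_imp_le order.trans)
    next
      case False then show ?thesis using IA ab w'c i unfolding condA_def by auto
    qed
  next
    fix i assume i: "k < i"
    show "w' i \<le> u i"
    proof (cases "i = b")
      case True then show ?thesis using IA ab w'b i unfolding condA_def by (metis less_imp_le order.trans)
    next
      case False then show ?thesis using IA ab w'c i unfolding condA_def by auto
    qed
  qed
  have injw: "\<And>x y. w x = w y \<longleftrightarrow> x = y" using Sinf_inj[OF ab(1)] .
  have B: "condB k u w'" unfolding condB_def
  proof (intro allI impI)
    fix i j assume h: "1 \<le> i \<and> i < j \<and> (j \<le> k \<or> k < i) \<and> u i < u j"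
    then have old: "w i < w j" using IB unfolding condB_def by blast
    show "w' i < w' j"
    proof (cases "i = a")
      case True
      then have "j \<le> k" "j \<noteq> b" using h ab by auto
      then have "\<not> (w a < w j \<and> w j < w b)" using ab(7) h True ab by auto
      moreover have "w j \<noteq> w b" using injw \<open>j \<noteq> b\<close> by auto
      ultimately show ?thesis using True old w'a w'c[of j] \<open>j \<noteq> b\<close> h by auto
    next
      case ia: False
      show ?thesis
      proof (cases "j = a")
        case True
        then have "i \<noteq> b" using h ab by auto
        then show ?thesis using True old w'a w'c[of i] ia ab(6) by auto
      next
        case ja: False
        show ?thesis
        proof (cases "i = b")
          case True
          then have "j \<noteq> b" using h by auto
          then show ?thesis using True old w'b w'c[of j] ja ab(6) by auto
        next
          case ib: False
          show ?thesis
          proof (cases "j = b")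
            case True
            then have "a < i" "i < b" using h ab ia by auto
            then have "\<not> (w a < w i \<and> w i < w b)" using ab(7) by auto
            moreover have "w i \<noteq> w a" using injw ia by auto
            ultimately show ?thesis using True old w'b w'c[of i] ia ib by auto
          next
            case False
            then show ?thesis using old w'c ia ja ib by auto
          qed
        qed
      qed
    qed
  qed
  show ?case using S A B by auto
qed



lemma Sinf_inv_apply: assumes "u \<in> S_inf" shows "u (inv u v) = v" "inv u (u v) = v"
  using Sinf_D(1)[OF assms] by (auto simp: bij_is_surj surj_f_inv_f bij_is_inj inv_f_f)

lemma cond_exists_a:
  assumes u: "u \<in> S_inf" and w: "w \<in> S_inf" and A: "condA k u w" and ne: "u \<noteq> w"
  shows "\<exists>a. 1 \<le> a \<and> a \<le> k \<and> u a < w a"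
proof (rule ccontr)
  assume "\<not> ?thesis"
  then have eq: "\<And>i. 1 \<le> i \<Longrightarrow> i \<le> k \<Longrightarrow> w i = u i" using A unfolding condA_def by (meson le_antisym not_le)
  have le: "\<And>i. w i \<le> u i"
  proof -
    fix i show "w i \<le> u i"
      using eq[of i] A Sinf_D(2)[OF u] Sinf_D(2)[OF w] unfolding condA_def
      by (cases "i = 0"; cases "i \<le> k") auto
  qed
  obtain i0 where "w i0 \<noteq> u i0" using ne by (metis ext)
  then have "w i0 < u i0" using le[of i0] by auto
  then obtain i where i: "w i < u i" and mini: "\<forall>i'. w i' < u i' \<longrightarrow> u i \<le> u i'"
    using ex_has_least_nat[of "\<lambda>i. w i < u i" i0 u] by blast
  define j where "j = inv u (w i)"
  have uj: "u j = w i" unfolding j_def using Sinf_inv_apply[OF u] by auto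
  have "j \<noteq> i" using uj i by auto
  then have "w j \<noteq> w i" using Sinf_inj[OF w] by auto
  then have "w j < u j" using le[of j] uj by auto
  then have "u i \<le> u j" using mini by auto
  then show False using uj i by auto
qed

lemma cond_kbruhat:
  assumes "u \<in> S_inf" "w \<in> S_inf" "1 \<le> k" "condA k u w" "condB k u w"
  shows "kbruhat k u w"
proof -
  define M where "M u = (\<Sum>i\<in>{1..k}. w i - u i)" for u
  have "\<forall>u. M u = n \<longrightarrow> u \<in> S_inf \<longrightarrow> condA k u w \<longrightarrow> condB k u w \<longrightarrow> kbruhat k u w" for n
  proof (induction n rule: less_induct)
    case (less n)
    show ?case
    proof (intro allI impI)
      fix u assume Mu: "M u = n" and u: "u \<in> S_inf" and CA: "condA k u w" and CB: "condB k u w"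
      show "kbruhat k u w"
      proof (cases "u = w")
        case True then show ?thesis unfolding kbruhat_def by auto
      next
        case False
        have injw: "\<And>x y. w x = w y \<longleftrightarrow> x = y" using Sinf_inj[OF assms(2)] .
        have inju: "\<And>x y. u x = u y \<longleftrightarrow> x = y" using Sinf_inj[OF u] .
        define A where "A = {a. 1 \<le> a \<and> a \<le> k \<and> u a < w a}"
        have Ane: "A \<noteq> {}" using cond_exists_a[OF u assms(2) CA False] unfolding A_def by auto
        have Afin: "finite A" unfolding A_def by (rule finite_subset[of _ "{..k}"]) auto
        define x where "x = Max (u ` A)"
        have "x \<in> u ` A" unfolding x_def using Ane Afin by auto
        then obtain a where aA: "a \<in> A" and ua: "u a = x" by auto
        have maxA: "\<And>a'. a' \<in> A \<Longrightarrow> u a' \<le> x" unfolding x_def using Afin by auto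
        have a: "1 \<le> a" "a \<le> k" "u a < w a" using aA unfolding A_def by auto
        define y where "y = w a"
        have xy: "x < y" using a ua y_def by auto
        have fixL: "\<And>i. 1 \<le> i \<Longrightarrow> i \<le> k \<Longrightarrow> x < u i \<Longrightarrow> w i = u i"
        proof -
          fix i assume "1 \<le> i" "i \<le> k" "x < u i"
          moreover then have "u i \<le> w i" using CA unfolding condA_def by auto
          ultimately show "w i = u i" using maxA[of i] unfolding A_def by fastforce
        qed
        define B where "B = {b. k < b \<and> x < u b \<and> u b \<le> y \<and> w b \<le> x}"
        have Bne: "B \<noteq> {}"
        proof
          assume Be: "B = {}"
          define I where "I = {Suc x..y}"
          define g where "g v = w (inv u v)" for v
          have gI: "g ` I \<subseteq> I"
          proof
            fix z assume "z \<in> g ` I"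
            then obtain v where v: "v \<in> I" "z = g v" by auto
            define q where "q = inv u v"
            have uq: "u q = v" unfolding q_def using Sinf_inv_apply[OF u] by auto
            have vI: "x < v" "v \<le> y" using v I_def by auto
            have q0: "q \<noteq> 0" using uq vI Sinf_D(2)[OF u] by (metis not_less0)
            show "z \<in> I"
            proof (cases "q \<le> k")
              case True
              then have "w q = u q" using fixL[of q] q0 uq vI by auto
              then show ?thesis using v uq unfolding g_def q_def[symmetric] by auto
            next
              case False
              then have "w q \<le> u q" using CA unfolding condA_def by auto
              moreover have "\<not> w q \<le> x" using Be False uq vI unfolding B_def by auto
              ultimately show ?thesis using v uq vI unfolding g_def q_def[symmetric] I_def by auto
            qed
          qed
          have "inj_on g I" unfolding g_def inj_on_def
            using injw by (metis Sinf_inv_apply(1)[OF u])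
          then have "g ` I = I" using gI by (simp add: endo_inj_surj I_def)
          moreover have "y \<in> I" using xy I_def by auto
          ultimately obtain v where "v \<in> I" "g v = y" by (metis imageE)
          then have "inv u v = a" using injw unfolding g_def y_def by auto
          then have "v = x" using ua Sinf_inv_apply[OF u] by metis
          then show False using \<open>v \<in> I\<close> I_def by auto
        qed
        then obtain b0 where "b0 \<in> B" by auto
        then obtain b where bB: "b \<in> B" and minB: "\<forall>b'. b' \<in> B \<longrightarrow> u b \<le> u b'"
          using ex_has_least_nat[of "\<lambda>b. b \<in> B" b0 u] by blast
        have b: "k < b" "x < u b" "u b \<le> y" "w b \<le> x" using bB unfolding B_def by auto
        have ab: "a < b" using a b by auto
        have nocov: "\<forall>c. a < c \<and> c < b \<longrightarrow> \<not> (u a < u c \<and> u c < u b)"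
        proof (intro allI impI notI)
          fix c assume c: "a < c \<and> c < b" and cc: "u a < u c \<and> u c < u b"
          show False
          proof (cases "c \<le> k")
            case True
            then have "w c = u c" using fixL[of c] c cc a ua by auto
            moreover have "w a < w c" using CB c cc a True unfolding condB_def by auto
            ultimately show False using cc b y_def by auto
          next
            case False
            then have "w c < w b" using CB c cc unfolding condB_def by auto
            then have "c \<in> B" using False cc b ua unfolding B_def by auto
            then show False using minB cc by fastforce
          qed
        qed
        define u' where "u' = u \<circ> transpose a b"
        have u'a: "u' a = u b" and u'b: "u' b = u a" and u'c: "\<And>c. c \<noteq> a \<Longrightarrow> c \<noteq> b \<Longrightarrow> u' c = u c"
          unfolding u'_def by (auto simp: transpose_def)
        have u'S: "u' \<in> S_inf" unfolding u'_def using a ab by (auto intro!: Sinf_comp u Sinf_transpose)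
        have cov: "kcover k u u'"
          unfolding kcover_def using u a b ab nocov len_transpose_cover[OF u a(1) ab] ua u'_def by auto
        have CA': "condA k u' w" unfolding condA_def
        proof (intro allI conjI impI)
          fix i assume i: "1 \<le> i \<and> i \<le> k"
          show "u' i \<le> w i"
          proof (cases "i = a")
            case True then show ?thesis using u'a b y_def by auto
          next
            case False then show ?thesis using u'c[of i] i b CA unfolding condA_def by auto
          qed
        next
          fix i assume i: "k < i"
          show "w i \<le> u' i"
          proof (cases "i = b")
            case True then show ?thesis using u'b b ua by auto
          next
            case False then show ?thesis using u'c[of i] i a CA unfolding condA_def by auto
          qed
        qed
        have CB': "condB k u' w" unfolding condB_def
        proof (intro allI impI)
          fix i j assume h: "1 \<le> i \<and> i < j \<and> (j \<le> k \<or> k < i) \<and> u' i < u' j"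
          show "w i < w j"
          proof (cases "i = a")
            case True
            then have "j \<le> k" "j \<noteq> b" using h b a by auto
            then have "u a < u j" using h True u'a u'c[of j] b ua by auto
            then show ?thesis using CB h True \<open>j \<le> k\<close> unfolding condB_def by auto
          next
            case ia: False
            show ?thesis
            proof (cases "j = a")
              case True
              then have ik: "i \<le> k" "i \<noteq> b" using h a b by auto
              have ui: "u i < u b" using h True u'a u'c[of i] ia ik by auto
              show ?thesis
              proof (cases "u i < u a")
                case True
                then show ?thesis using CB h \<open>j = a\<close> ik a unfolding condB_def by auto
              next
                case False
                then have "x < u i" using inju ia ua by (metis nat_neq_iff)
                then have "w i = u i" using fixL[of i] h ik by auto
                then show ?thesis using ui b \<open>j = a\<close> y_def by auto
              qed
            next
              case ja: False
              show ?thesis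
              proof (cases "i = b")
                case True
                then have jk: "k < j" "j \<noteq> b" using h b by auto
                have uj: "u a < u j" using h True u'b u'c[of j] ja jk by auto
                show ?thesis
                proof (cases "u b < u j")
                  case True
                  then show ?thesis using CB h \<open>i = b\<close> jk b unfolding condB_def by auto
                next
                  case False
                  then have ujb: "u j < u b" using inju jk by (metis nat_neq_iff)
                  have "\<not> w j \<le> x"
                  proof
                    assume "w j \<le> x"
                    then have "j \<in> B" using jk uj ujb b ua unfolding B_def by auto
                    then show False using minB ujb by fastforce
                  qed
                  then show ?thesis using b \<open>i = b\<close> by auto
                qed
              next
                case ib: False
                show ?thesis
                proof (cases "j = b")
                  case True
                  then have "u i < u a" using h u'b u'c[of i] ia ib by auto
                  then have "u i < u b" using ab b ua by auto
                  then show ?thesis using CB h True unfolding condB_def by auto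
                next
                  case False
                  then have "u i < u j" using h u'c ia ib ja by auto
                  then show ?thesis using CB h unfolding condB_def by auto
                qed
              qed
            qed
          qed
        qed
        have "M u' < M u" unfolding M_def
        proof (rule sum_strict_mono_ex1)
          show "finite {1..k}" by simp
          show "\<forall>i\<in>{1..k}. w i - u' i \<le> w i - u i"
          proof
            fix i assume "i \<in> {1..k}"
            then show "w i - u' i \<le> w i - u i" using u'a u'c[of i] b ab ua by (cases "i = a") auto
          qed
          show "\<exists>i\<in>{1..k}. w i - u' i < w i - u i"
            using a u'a b ua y_def by (intro bexI[of _ a]) auto
        qed
        then have "kbruhat k u' w" using less.IH Mu u'S CA' CB' by auto
        then show ?thesis using cov unfolding kbruhat_def by (meson converse_rtranclp_into_rtranclp)
      qed
    qed
  qed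
  then show ?thesis using assms by blast
qed



definition eps :: "(nat \<Rightarrow> nat) \<Rightarrow> nat \<Rightarrow> int" where
  "eps z x = sgn (int (z x) - int x)"

definition gF :: "(nat \<Rightarrow> nat) \<Rightarrow> nat \<Rightarrow> nat \<Rightarrow> int" where
  "gF z x y = (if x < y \<and> z y < z x then - (eps z x * eps z y) else 0)"

definition bnd :: "(nat \<Rightarrow> nat) \<Rightarrow> nat" where
  "bnd z = (LEAST N. \<forall>x>N. z x = x)"

definition Fz :: "(nat \<Rightarrow> nat) \<Rightarrow> int" where
  "Fz z = (\<Sum>x\<in>{1..bnd z}. \<Sum>y\<in>{1..bnd z}. gF z x y)"

lemma sum2_restrict:
  fixes g :: "nat \<Rightarrow> nat \<Rightarrow> int"
  assumes "n \<le> N" "\<And>x y. x > n \<or> y > n \<Longrightarrow> g x y = 0"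
  shows "(\<Sum>x\<in>{1..N}. \<Sum>y\<in>{1..N}. g x y) = (\<Sum>x\<in>{1..n}. \<Sum>y\<in>{1..n}. g x y)"
proof -
  have i: "(\<Sum>y\<in>{1..N}. g x y) = (\<Sum>y\<in>{1..n}. g x y)" for x
    by (rule sum.mono_neutral_right) (use assms in auto)
  have "(\<Sum>x\<in>{1..N}. \<Sum>y\<in>{1..N}. g x y) = (\<Sum>x\<in>{1..N}. \<Sum>y\<in>{1..n}. g x y)"
    using i by simp
  also have "\<dots> = (\<Sum>x\<in>{1..n}. \<Sum>y\<in>{1..n}. g x y)"
    by (rule sum.mono_neutral_right) (use assms in \<open>auto intro!: sum.neutral\<close>)
  finally show ?thesis .
qed

lemma Fz_N: assumes "z \<in> S_inf" "\<forall>x>N. z x = x"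
  shows "Fz z = (\<Sum>x\<in>{1..N}. \<Sum>y\<in>{1..N}. gF z x y)"
proof -
  have b: "\<forall>x>bnd z. z x = x" unfolding bnd_def using assms(2) by (rule LeastI)
  have "bnd z \<le> N" unfolding bnd_def using assms(2) by (rule Least_le)
  moreover have "gF z x y = 0" if "x > bnd z \<or> y > bnd z" for x y
    using b that unfolding gF_def eps_def by auto
  ultimately show ?thesis unfolding Fz_def by (intro sum2_restrict[symmetric]) auto
qed

lemma sum_sym:
  fixes d :: "nat \<Rightarrow> nat \<Rightarrow> int"
  assumes "finite A"
  shows "(\<Sum>x\<in>A. \<Sum>y\<in>A. d x y) = (\<Sum>x\<in>A. \<Sum>y\<in>A. if x < y then d x y + d y x else 0) + (\<Sum>x\<in>A. d x x)"
proof -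
  have "(\<Sum>x\<in>A. \<Sum>y\<in>A. d x y) = (\<Sum>x\<in>A. \<Sum>y\<in>A. (if x < y then d x y else 0) + (if y < x then d x y else 0) + (if x = y then d x y else 0))"
    by (intro sum.cong refl) auto
  also have "\<dots> = (\<Sum>x\<in>A. \<Sum>y\<in>A. if x < y then d x y else 0) + (\<Sum>x\<in>A. \<Sum>y\<in>A. if y < x then d x y else 0) + (\<Sum>x\<in>A. \<Sum>y\<in>A. if x = y then d x y else 0)"
    by (simp add: sum.distrib)
  also have "(\<Sum>x\<in>A. \<Sum>y\<in>A. if y < x then d x y else 0) = (\<Sum>x\<in>A. \<Sum>y\<in>A. if x < y then d y x else 0)"
    by (rule sum.swap)
  also have "(\<Sum>x\<in>A. \<Sum>y\<in>A. if x = y then d x y else 0) = (\<Sum>x\<in>A. d x x)"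
    using assms by (simp add: sum.delta)
  finally show ?thesis by (simp add: sum.distrib[symmetric] if_distrib cong: if_cong) 
qed

lemma flow:
  assumes z: "z \<in> S_inf" "\<forall>x>N. z x = x" and c: "c \<in> {1..N}" "z c = c"
  shows "card {y\<in>{1..N}. c < y \<and> z y < c} = card {x\<in>{1..N}. x < c \<and> c < z x}"
proof -
  have bb: "bij_betw z {1..N} {1..N}" using Sinf_bij_betw[OF z] .
  have injz: "\<And>x y. z x = z y \<longleftrightarrow> x = y" using Sinf_inj[OF z(1)] .
  define P where "P = {v\<in>{1..N}. z v < c}"
  have "z ` P = {1..<c}"
  proof
    show "z ` P \<subseteq> {1..<c}" unfolding P_def using Sinf_pos[OF z(1)] by auto
    show "{1..<c} \<subseteq> z ` P"
    proof
      fix v assume v: "v \<in> {1..<c}"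
      then have "v \<in> {1..N}" using c by auto
      then obtain q where "q \<in> {1..N}" "z q = v" using bb by (metis bij_betw_def imageE)
      then show "v \<in> z ` P" unfolding P_def using v by auto
    qed
  qed
  moreover have "inj_on z P" using injz unfolding inj_on_def by auto
  ultimately have cP: "card P = c - 1" by (metis card_atLeastLessThan card_image)
  have P: "P = {v\<in>{1..N}. v < c \<and> z v < c} \<union> {v\<in>{1..N}. c < v \<and> z v < c}"
  proof -
    have "v \<noteq> c" if "z v < c" for v using c(2) that by auto
    then show ?thesis unfolding P_def by (auto simp: nat_neq_iff)
  qed
  have cP2: "card P = card {v\<in>{1..N}. v < c \<and> z v < c} + card {v\<in>{1..N}. c < v \<and> z v < c}"
    unfolding P by (rule card_Un_disjoint) auto
  define Q where "Q = {v\<in>{1..N}. v < c}"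
  have "Q = {1..<c}" unfolding Q_def using c by auto
  then have cQ: "card Q = c - 1" by simp
  have Q: "Q = {v\<in>{1..N}. v < c \<and> z v < c} \<union> {v\<in>{1..N}. v < c \<and> c < z v}"
  proof -
    have "z v \<noteq> c" if "v < c" for v using injz c(2) that by (metis less_irrefl)
    then show ?thesis unfolding Q_def by (auto simp: nat_neq_iff)
  qed
  have cQ2: "card Q = card {v\<in>{1..N}. v < c \<and> z v < c} + card {v\<in>{1..N}. v < c \<and> c < z v}"
    unfolding Q by (rule card_Un_disjoint) auto
  show ?thesis using cP cP2 cQ cQ2 by auto
qed



lemma pw:
  fixes px py x y zx zy k :: nat
  assumes "px \<noteq> py" "zx \<noteq> zy" "x \<noteq> y"
  "px \<le> k \<Longrightarrow> x \<le> zx" "k < px \<Longrightarrow> zx \<le> x" "py \<le> k \<Longrightarrow> y \<le> zy" "k < py \<Longrightarrow> zy \<le> y"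
  "px < py \<Longrightarrow> (py \<le> k \<or> k < px) \<Longrightarrow> x < y \<Longrightarrow> zx < zy"
  "py < px \<Longrightarrow> (px \<le> k \<or> k < py) \<Longrightarrow> y < x \<Longrightarrow> zy < zx"
  shows "(if x < y \<and> zy < zx then (if px < py then 1 else -1) + sgn (int zx - int x) * sgn (int zy - int y) else (0::int))
   = (if zx = x \<and> x < y \<and> zy < x then (if px \<le> k then 1 else -1) else 0)
     + (if zy = y \<and> x < y \<and> y < zx then - (if py \<le> k then 1 else -1) else 0)"
proof (cases "x < y \<and> zy < zx")
  case False
  then show ?thesis by auto
next
  case True
  then have xy: "x < y" "zy < zx" by auto
  show ?thesis
  proof (cases "zx = x")
    case zx: True
    then have "zy < y" "zy \<noteq> y" using xy by auto
    then have "k < py" using assms(6) by (meson not_le)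
    then show ?thesis using zx xy assms by (cases "px \<le> k") (auto simp: sgn_if)
  next
    case zx: False
    show ?thesis
    proof (cases "zy = y")
      case zy: True
      then have "x < zx" using xy by auto
      then have "px \<le> k" using assms(5) by (meson not_le)
      then show ?thesis using zx zy xy assms by (cases "py \<le> k") (auto simp: sgn_if)
    next
      case zy: False
      show ?thesis
      proof (cases "x < zx")
        case True
        then have pxk: "px \<le> k" using assms(5) by (meson not_le)
        show ?thesis
        proof (cases "y < zy")
          case True
          then have "py \<le> k" using assms(7) by (meson not_le)
          then show ?thesis using pxk True \<open>x < zx\<close> xy zx zy assms(1,8,9) by (auto simp: sgn_if)
        next
          case False
          then have "zy < y" using zy by auto
          then have "k < py" using assms(6) by (meson not_le)
          then show ?thesis using pxk \<open>zy < y\<close> \<open>x < zx\<close> xy zx zy by (auto simp: sgn_if)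
        qed
      next
        case False
        then have "zx < x" using zx by auto
        then have pxk: "k < px" using assms(4) by (meson not_le)
        have "zy < y" using \<open>zx < x\<close> xy by auto
        then have "k < py" using assms(6) by (meson not_le)
        then show ?thesis using pxk \<open>zy < y\<close> \<open>zx < x\<close> xy zx zy assms(1,8,9) by (auto simp: sgn_if)
      qed
    qed
  qed
qed

lemma sum_if_card:
  fixes t :: int
  assumes "finite A" shows "(\<Sum>y\<in>A. if P y then t else 0) = t * int (card {y\<in>A. P y})"
  using assms by (simp add: sum.If_cases Int_def conj_commute)



lemma len_diff:
  assumes u: "u \<in> S_inf" and w: "w \<in> S_inf" and CA: "condA k u w" and CB: "condB k u w"
  shows "int (len w) - int (len u) = Fz (w \<circ> inv u)"
proof -
  obtain N1 where N1: "\<forall>x>N1. u x = x" using Sinf_bound[OF u] by blast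
  obtain N where N: "\<forall>x>N. w x = x" "N1 \<le> N" using Sinf_bound2[OF w] by blast
  have uN: "\<forall>x>N. u x = x" using N1 N by auto
  define pos where "pos = inv u"
  have pS: "pos \<in> S_inf" unfolding pos_def by (rule Sinf_inv[OF u])
  have upos: "\<And>x. u (pos x) = x" and posu: "\<And>x. pos (u x) = x" unfolding pos_def using Sinf_inv_apply[OF u] by auto
  have pN: "\<forall>x>N. pos x = x" using uN posu by metis
  define z where "z = w \<circ> pos"
  have zS: "z \<in> S_inf" unfolding z_def by (rule Sinf_comp[OF w pS])
  have zN: "\<forall>x>N. z x = x" unfolding z_def using pN N by auto
  have bp: "bij_betw pos {1..N} {1..N}" by (rule Sinf_bij_betw[OF pS pN])
  have injp: "\<And>x y. pos x = pos y \<longleftrightarrow> x = y" using Sinf_inj[OF pS] .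
  have injz: "\<And>x y. z x = z y \<longleftrightarrow> x = y" using Sinf_inj[OF zS] .
  have posge: "\<And>x. 1 \<le> x \<Longrightarrow> 1 \<le> pos x" using Sinf_pos[OF pS] .
  have reidx: "(\<Sum>i\<in>{1..N}. \<Sum>j\<in>{1..N}. G i j) = (\<Sum>x\<in>{1..N}. \<Sum>y\<in>{1..N}. G (pos x) (pos y))" for G :: "nat \<Rightarrow> nat \<Rightarrow> int"
  proof -
    have "(\<Sum>j\<in>{1..N}. G i j) = (\<Sum>y\<in>{1..N}. G i (pos y))" for i
      using sum.reindex_bij_betw[OF bp, of "G i"] by simp
    then have "(\<Sum>i\<in>{1..N}. \<Sum>j\<in>{1..N}. G i j) = (\<Sum>i\<in>{1..N}. \<Sum>y\<in>{1..N}. G i (pos y))"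
      by simp
    also have "\<dots> = (\<Sum>x\<in>{1..N}. \<Sum>y\<in>{1..N}. G (pos x) (pos y))"
      using sum.reindex_bij_betw[OF bp, of "\<lambda>i. \<Sum>y\<in>{1..N}. G i (pos y)"] by simp
    finally show ?thesis .
  qed
  define d where "d x y = (if pos x < pos y \<and> z y < z x then 1 else 0) - (if pos x < pos y \<and> y < x then 1 else (0::int))" for x y
  have "int (len w) - int (len u) = (\<Sum>x\<in>{1..N}. \<Sum>y\<in>{1..N}. d x y)"
    unfolding len_sum[OF w N(1)] len_sum[OF u uN] reidx[of "\<lambda>i j. if i < j \<and> w j < w i then 1 else 0"]
      reidx[of "\<lambda>i j. if i < j \<and> u j < u i then 1 else 0"] d_def
    by (simp add: z_def upos sum_subtractf)
  also have "\<dots> = (\<Sum>x\<in>{1..N}. \<Sum>y\<in>{1..N}. if x < y then d x y + d y x else 0)"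
    by (subst sum_sym) (auto simp: d_def)
  finally have L: "int (len w) - int (len u) = (\<Sum>x\<in>{1..N}. \<Sum>y\<in>{1..N}. if x < y then d x y + d y x else 0)" .
  have R: "Fz (w \<circ> inv u) = (\<Sum>x\<in>{1..N}. \<Sum>y\<in>{1..N}. gF z x y)"
    using Fz_N[OF zS zN] unfolding z_def pos_def .
  define tau where "tau c = (if pos c \<le> k then 1 else (-1::int))" for c
  define T1 where "T1 x y = (if z x = x \<and> x < y \<and> z y < x then tau x else 0)" for x y
  define T2 where "T2 x y = (if z y = y \<and> x < y \<and> y < z x then - tau y else 0)" for x y
  have pt: "(if x < y then d x y + d y x else 0) - gF z x y = T1 x y + T2 x y" if xy: "x \<in> {1..N}" "y \<in> {1..N}" for x y
  proof (cases "x = y")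
    case True then show ?thesis unfolding T1_def T2_def gF_def by auto
  next
    case False
    have px: "1 \<le> pos x" "1 \<le> pos y" using posge xy by auto
    have A1: "pos x \<le> k \<Longrightarrow> x \<le> z x" using CA px upos unfolding condA_def z_def by (metis comp_apply)
    have A2: "k < pos x \<Longrightarrow> z x \<le> x" using CA upos unfolding condA_def z_def by (metis comp_apply)
    have A3: "pos y \<le> k \<Longrightarrow> y \<le> z y" using CA px upos unfolding condA_def z_def by (metis comp_apply)
    have A4: "k < pos y \<Longrightarrow> z y \<le> y" using CA upos unfolding condA_def z_def by (metis comp_apply)
    have B1: "pos x < pos y \<Longrightarrow> (pos y \<le> k \<or> k < pos x) \<Longrightarrow> x < y \<Longrightarrow> z x < z y"
      using CB px upos unfolding condB_def z_def by (metis comp_apply)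
    have B2: "pos y < pos x \<Longrightarrow> (pos x \<le> k \<or> k < pos y) \<Longrightarrow> y < x \<Longrightarrow> z y < z x"
      using CB px upos unfolding condB_def z_def by (metis comp_apply)
    have ne: "pos x \<noteq> pos y" "z x \<noteq> z y" using False injp injz by auto
    have "(if x < y then d x y + d y x else 0) - gF z x y
        = (if x < y \<and> z y < z x then (if pos x < pos y then 1 else -1) + sgn (int (z x) - int x) * sgn (int (z y) - int y) else (0::int))"
      unfolding d_def gF_def eps_def using ne False by (auto simp: nat_neq_iff)
    also have "\<dots> = T1 x y + T2 x y"
      unfolding T1_def T2_def tau_def
      by (rule pw[OF ne False A1 A2 A3 A4 B1 B2])
    finally show ?thesis .
  qed
  have fin: "finite {1..N}" by simp
  have S1: "(\<Sum>x\<in>{1..N}. \<Sum>y\<in>{1..N}. T1 x y) = (\<Sum>c\<in>{1..N}. if z c = c then tau c * int (card {y\<in>{1..N}. c < y \<and> z y < c}) else 0)"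
  proof (intro sum.cong refl)
    fix c assume "c \<in> {1..N}"
    show "(\<Sum>y\<in>{1..N}. T1 c y) = (if z c = c then tau c * int (card {y\<in>{1..N}. c < y \<and> z y < c}) else 0)"
      unfolding T1_def using sum_if_card[OF fin, of "\<lambda>y. c < y \<and> z y < c" "tau c"] by auto
  qed
  have S2: "(\<Sum>x\<in>{1..N}. \<Sum>y\<in>{1..N}. T2 x y) = (\<Sum>c\<in>{1..N}. if z c = c then - tau c * int (card {x\<in>{1..N}. x < c \<and> c < z x}) else 0)"
  proof -
    have "(\<Sum>x\<in>{1..N}. \<Sum>y\<in>{1..N}. T2 x y) = (\<Sum>y\<in>{1..N}. \<Sum>x\<in>{1..N}. T2 x y)" by (rule sum.swap)
    also have "\<dots> = (\<Sum>c\<in>{1..N}. if z c = c then - tau c * int (card {x\<in>{1..N}. x < c \<and> c < z x}) else 0)"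
    proof (intro sum.cong refl)
      fix c assume "c \<in> {1..N}"
      show "(\<Sum>x\<in>{1..N}. T2 x c) = (if z c = c then - tau c * int (card {x\<in>{1..N}. x < c \<and> c < z x}) else 0)"
        unfolding T2_def using sum_if_card[OF fin, of "\<lambda>x. x < c \<and> c < z x" "- tau c"] by auto
    qed
    finally show ?thesis .
  qed
  have S0: "(\<Sum>x\<in>{1..N}. \<Sum>y\<in>{1..N}. T1 x y + T2 x y) = 0"
  proof -
    have "(\<Sum>x\<in>{1..N}. \<Sum>y\<in>{1..N}. T1 x y + T2 x y) = (\<Sum>x\<in>{1..N}. \<Sum>y\<in>{1..N}. T1 x y) + (\<Sum>x\<in>{1..N}. \<Sum>y\<in>{1..N}. T2 x y)"
      by (simp add: sum.distrib)
    also have "\<dots> = (\<Sum>c\<in>{1..N}. (if z c = c then tau c * int (card {y\<in>{1..N}. c < y \<and> z y < c}) else 0)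
        + (if z c = c then - tau c * int (card {x\<in>{1..N}. x < c \<and> c < z x}) else 0))"
      unfolding S1 S2 by (simp add: sum.distrib)
    also have "\<dots> = 0"
      by (intro sum.neutral ballI) (use flow[OF zS zN] in auto)
    finally show ?thesis .
  qed
  have "(\<Sum>x\<in>{1..N}. \<Sum>y\<in>{1..N}. if x < y then d x y + d y x else 0) - (\<Sum>x\<in>{1..N}. \<Sum>y\<in>{1..N}. gF z x y)
      = (\<Sum>x\<in>{1..N}. \<Sum>y\<in>{1..N}. T1 x y + T2 x y)"
    using pt by (simp add: sum_subtractf[symmetric])
  then show ?thesis using L R S0 by simp
qed



lemma card_ge_antitone:
  assumes "finite L" "x \<in> L" "x' \<in> L" "x < x'"
  shows "card {y\<in>L. x' \<le> y} < card {y\<in>L. (x::nat) \<le> y}"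
proof (rule psubset_card_mono)
  show "finite {y\<in>L. x \<le> y}" using assms by auto
  have "x \<in> {y\<in>L. x \<le> y}" "x \<notin> {y\<in>L. x' \<le> y}" using assms by auto
  moreover have "{y\<in>L. x' \<le> y} \<subseteq> {y\<in>L. x \<le> y}" using assms by auto
  ultimately show "{y\<in>L. x' \<le> y} \<subset> {y\<in>L. x \<le> y}" by blast
qed

lemma exists_witness:
  assumes z: "z \<in> S_inf"
  shows "\<exists>u k. 1 \<le> k \<and> u \<in> S_inf \<and> condA k u (z \<circ> u) \<and> condB k u (z \<circ> u)"
proof -
  obtain N where N: "\<forall>x>N. z x = x" "1 \<le> N" using Sinf_bound2[OF z] by blast
  define L where "L = {x\<in>{1..N}. x \<le> z x}"
  define D where "D = {x\<in>{1..N}. z x < x}"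
  define k where "k = card L"
  define pos where "pos x = (if x \<in> L then card {y\<in>L. x \<le> y} else if x \<in> D then k + card {y\<in>D. x \<le> y} else x)" for x
  have finL: "finite L" and finD: "finite D" unfolding L_def D_def by auto
  have LD: "L \<inter> D = {}" "L \<union> D = {1..N}" unfolding L_def D_def by auto
  have kD: "k + card D = N" unfolding k_def using card_Un_disjoint[OF finL finD LD(1)] LD(2) by simp
  have z1: "1 \<le> z 1" using Sinf_pos[OF z] by auto
  have "1 \<in> L" unfolding L_def using N z1 by auto
  then have k1: "1 \<le> k" unfolding k_def using finL by (auto simp: Suc_le_eq card_gt_0_iff)
  have posL: "1 \<le> pos x \<and> pos x \<le> k" if "x \<in> L" for x
  proof -
    have "x \<in> {y\<in>L. x \<le> y}" using that by auto
    then have "card {y\<in>L. x \<le> y} \<ge> 1" using finL by (auto simp: Suc_le_eq card_gt_0_iff)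
    moreover have "card {y\<in>L. x \<le> y} \<le> k" unfolding k_def using finL by (intro card_mono) auto
    ultimately show ?thesis unfolding pos_def using that by auto
  qed
  have posD: "k < pos x \<and> pos x \<le> N" if "x \<in> D" for x
  proof -
    have "x \<in> {y\<in>D. x \<le> y}" using that by auto
    then have "card {y\<in>D. x \<le> y} \<ge> 1" using finD by (auto simp: Suc_le_eq card_gt_0_iff)
    moreover have "card {y\<in>D. x \<le> y} \<le> card D" using finD by (intro card_mono) auto
    ultimately show ?thesis unfolding pos_def using that LD kD by auto
  qed
  have posO: "pos x = x" if "x \<notin> {1..N}" for x unfolding pos_def using that LD by auto
  have antiL: "pos x' < pos x" if "x \<in> L" "x' \<in> L" "x < x'" for x x'
    unfolding pos_def using that card_ge_antitone[OF finL that] by auto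
  have antiD: "pos x' < pos x" if "x \<in> D" "x' \<in> D" "x < x'" for x x'
    unfolding pos_def using that card_ge_antitone[OF finD that] LD by auto
  have kN: "k \<le> N" using kD by auto
  have neq: "pos x \<noteq> pos y" if xy: "x < y" for x y
  proof (cases "x \<in> L")
    case xL: True
    show ?thesis
    proof (cases "y \<in> L")
      case True then show ?thesis using antiL[OF xL True xy] by simp
    next
      case False
      show ?thesis
      proof (cases "y \<in> D")
        case True then show ?thesis using posL[OF xL] posD[OF True] by simp
      next
        case yD: False
        then have "y \<notin> {1..N}" using False LD by blast
        then show ?thesis using posO[of y] posL[OF xL] kN xy by auto
      qed
    qed
  next
    case xL: False
    show ?thesis
    proof (cases "x \<in> D")
      case xD: True
      show ?thesis
      proof (cases "y \<in> L")
        case True then show ?thesis using posL[OF True] posD[OF xD] by simp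
      next
        case False
        show ?thesis
        proof (cases "y \<in> D")
          case True then show ?thesis using antiD[OF xD True xy] by simp
        next
          case yD: False
          then have "y \<notin> {1..N}" using False LD by blast
          then show ?thesis using posO[of y] posD[OF xD] xy by auto
        qed
      qed
    next
      case xD: False
      then have xO: "x \<notin> {1..N}" using xL LD by blast
      show ?thesis
      proof (cases "x = 0")
        case True
        have "pos y \<ge> 1"
        proof (cases "y \<in> L")
          case True then show ?thesis using posL by auto
        next
          case False
          then show ?thesis using posD[of y] posO[of y] LD xy \<open>x = 0\<close> by (cases "y \<in> D") auto
        qed
        then show ?thesis using posO[OF xO] True by auto
      next
        case False
        then have "x > N" using xO by auto
        then have "y \<notin> {1..N}" using xy by auto
        then show ?thesis using posO[OF xO] posO[of y] xy by auto
      qed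
    qed
  qed
  have injp: "inj pos"
  proof (rule injI)
    fix x y assume e: "pos x = pos y"
    show "x = y" using neq[of x y] neq[of y x] e by (metis linorder_neqE_nat)
  qed
  have img: "pos ` {1..N} \<subseteq> {1..N}" using posL posD LD kD by fastforce
  have "inj_on pos {1..N}" using injp by (simp add: inj_on_def inj_def)
  then have img2: "pos ` {1..N} = {1..N}" using img by (simp add: endo_inj_surj)
  have surjp: "surj pos"
  proof -
    have "y \<in> range pos" for y
    proof (cases "y \<in> {1..N}")
      case True then have "y \<in> pos ` {1..N}" using img2 by auto
      then show ?thesis by auto
    next
      case False then show ?thesis using posO[of y] by (metis rangeI)
    qed
    then show ?thesis by auto
  qed
  have pS: "pos \<in> S_inf" unfolding S_inf_def
  proof (intro CollectI conjI)
    show "bij pos" using injp surjp by (simp add: bij_def)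
    show "pos 0 = 0" using posO by auto
    have "{i. pos i \<noteq> i} \<subseteq> {1..N}" using posO by blast
    then show "finite {i. pos i \<noteq> i}" by (rule finite_subset) auto
  qed
  define u where "u = inv pos"
  have uS: "u \<in> S_inf" unfolding u_def by (rule Sinf_inv[OF pS])
  have posu: "\<And>i. pos (u i) = i" unfolding u_def using Sinf_inv_apply[OF pS] by auto
  have notL: "z x \<le> x" if "x \<notin> L" for x
  proof (cases "x \<in> {1..N}")
    case True then show ?thesis using that L_def by auto
  next
    case False then show ?thesis using N Sinf_D(2)[OF z] by (cases "x = 0") auto
  qed
  have inL: "x \<in> L" if "1 \<le> pos x" "pos x \<le> k" for x
  proof (rule ccontr)
    assume nx: "x \<notin> L"
    show False
    proof (cases "x \<in> D")
      case True then show False using posD that by fastforce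
    next
      case False
      then have "x \<notin> {1..N}" using nx LD by auto
      then have "pos x = x" using posO by auto
      then show False using that \<open>x \<notin> {1..N}\<close> kD by auto
    qed
  qed
  have CA: "condA k u (z \<circ> u)" unfolding condA_def
  proof (intro allI conjI impI)
    fix i assume "1 \<le> i \<and> i \<le> k"
    then have "u i \<in> L" using inL posu by auto
    then show "u i \<le> (z \<circ> u) i" unfolding L_def by auto
  next
    fix i assume i: "k < i"
    then have "u i \<notin> L" using posL posu by (metis leD)
    then show "(z \<circ> u) i \<le> u i" using notL by auto
  qed
  have CB: "condB k u (z \<circ> u)" unfolding condB_def
  proof (intro allI impI)
    fix i j assume h: "1 \<le> i \<and> i < j \<and> (j \<le> k \<or> k < i) \<and> u i < u j"
    define x where "x = u i"
    define y where "y = u j"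
    have px: "pos x = i" "pos y = j" unfolding x_def y_def using posu by auto
    have xy: "x < y" using h x_def y_def by auto
    show "(z \<circ> u) i < (z \<circ> u) j"
    proof (cases "j \<le> k")
      case True
      then have "x \<in> L" "y \<in> L" using inL px h by auto
      then show ?thesis using antiL xy px h by fastforce
    next
      case False
      then have ki: "k < i" using h by auto
      have xL: "x \<notin> L" "y \<notin> L" using posL px ki h by (metis leD less_trans)+
      have p0: "pos 0 = 0" using posO by auto
      have x0: "x \<noteq> 0" "y \<noteq> 0"
      proof -
        show "x \<noteq> 0" proof assume "x = 0" then have "i = 0" using px p0 by auto then show False using ki by auto qed
        show "y \<noteq> 0" proof assume "y = 0" then have "j = 0" using px p0 by auto then show False using ki h by auto qed
      qed
      show ?thesis
      proof (cases "x \<in> D")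
        case xD: True
        show ?thesis
        proof (cases "y \<in> D")
          case True then show ?thesis using antiD xD xy px h by fastforce
        next
          case False
          then have "y \<notin> {1..N}" using xL LD by auto
          then have "z y = y" using N x0 by auto
          then show ?thesis using xD xy D_def x_def y_def by auto
        qed
      next
        case xD: False
        then have xO: "x \<notin> {1..N}" using xL LD by auto
        then have "x > N" using x0 by auto
        show ?thesis
        proof (cases "y \<in> D")
          case True
          then have "pos y \<le> N" using posD by auto
          then show ?thesis using posO[OF xO] px h \<open>x > N\<close> by auto
        next
          case False
          then have "y \<notin> {1..N}" using xL LD by auto
          then have "z y = y" "z x = x" using N x0 xO by auto
          then show ?thesis using xy x_def y_def by auto
        qed
      qed
    qed
  qed
  show ?thesis using k1 uS CA CB by blast
qed

lemma ell_eq: assumes z: "z \<in> S_inf" shows "ell_u z = Fz z"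
proof -
  obtain u k where w: "1 \<le> k" "u \<in> S_inf" "condA k u (z \<circ> u)" "condB k u (z \<circ> u)"
    using exists_witness[OF z] by blast
  have zu: "z \<circ> u \<in> S_inf" using Sinf_comp[OF z w(2)] .
  have zz: "(z \<circ> u) \<circ> inv u = z" if "u \<in> S_inf" for u :: "nat \<Rightarrow> nat"
    using Sinf_inv_apply(1)[OF that] by (auto simp: fun_eq_iff)
  have P: "\<exists>u k. 1 \<le> k \<and> u \<in> S_inf \<and> kbruhat k u (z \<circ> u) \<and> Fz z = int (len (z \<circ> u)) - int (len u)"
    using w cond_kbruhat[OF w(2) zu w(1,3,4)] len_diff[OF w(2) zu w(3,4)] zz[OF w(2)] by metis
  have U: "n = Fz z" if h0: "\<exists>u k. 1 \<le> k \<and> u \<in> S_inf \<and> kbruhat k u (z \<circ> u) \<and> n = int (len (z \<circ> u)) - int (len u)" for n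
  proof -
    obtain u k where h: "1 \<le> k" "u \<in> S_inf" "kbruhat k u (z \<circ> u)" "n = int (len (z \<circ> u)) - int (len u)"
      using h0 by blast
    then have "z \<circ> u \<in> S_inf \<and> condA k u (z \<circ> u) \<and> condB k u (z \<circ> u)" using kbruhat_cond by blast
    then show ?thesis using len_diff[of u "z \<circ> u" k] h zz[OF h(2)] by auto
  qed
  show ?thesis unfolding ell_u_def using P U by (rule some_equality)
qed



lemma w0_invol: "w0 m (w0 m x) = x" unfolding w0_def by auto

lemma w0_bij: "bij_betw (w0 m) {1..m} {1..m}"
proof -
  have "w0 m ` {1..m} \<subseteq> {1..m}" unfolding w0_def by auto
  moreover have "inj_on (w0 m) {1..m}" by (rule inj_on_inverseI[of _ "w0 m"]) (rule w0_invol)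
  ultimately show ?thesis by (simp add: bij_betw_def endo_inj_surj)
qed

lemma w0_S: "w0 m \<in> S_inf"
proof -
  have "bij (w0 m)" by (rule o_bij[of "w0 m"]) (auto simp: w0_invol fun_eq_iff)
  moreover have "{i. w0 m i \<noteq> i} \<subseteq> {1..m}" unfolding w0_def by auto
  moreover have "w0 m 0 = 0" unfolding w0_def by simp
  moreover have "finite {i. w0 m i \<noteq> i}" using finite_subset[OF calculation(2)] by simp
  ultimately show ?thesis unfolding S_inf_def by blast
qed

lemma Sm_D: "z \<in> S_m m \<Longrightarrow> z \<in> S_inf \<and> (\<forall>i>m. z i = i)" unfolding S_m_def by auto

lemma Fz_w0:
  assumes z: "z \<in> S_m m"
  shows "Fz (w0 m \<circ> z \<circ> w0 m) = Fz z"
proof -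
  have zS: "z \<in> S_inf" and zm: "\<forall>i>m. z i = i" using Sm_D[OF z] by auto
  define W where "W = w0 m"
  define z' where "z' = W \<circ> z \<circ> W"
  have z'S: "z' \<in> S_inf" unfolding z'_def W_def using Sinf_comp w0_S zS by metis
  have z'm: "\<forall>i>m. z' i = i" unfolding z'_def W_def w0_def using zm by auto
  have bW: "bij_betw W {1..m} {1..m}" unfolding W_def by (rule w0_bij)
  have zin: "z x \<in> {1..m}" if "x \<in> {1..m}" for x using bij_betwE[OF Sinf_bij_betw[OF zS zm]] that by blast
  have Wv: "int (W x) = int m + 1 - int x" if "x \<in> {1..m}" for x using that unfolding W_def w0_def by auto
  have pt: "gF z' (W y) (W x) = gF z x y" if "x \<in> {1..m}" "y \<in> {1..m}" for x y
  proof -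
    have "W (W v) = v" for v unfolding W_def by (rule w0_invol)
    then have zz: "z' (W v) = W (z v)" for v unfolding z'_def by auto
    have e: "eps z' (W v) = - eps z v" if "v \<in> {1..m}" for v
    proof -
      have "int (W (z v)) - int (W v) = - (int (z v) - int v)" using Wv[OF that] Wv[OF zin[OF that]] by linarith
      then show ?thesis unfolding eps_def zz by (simp add: sgn_if)
    qed
    have o1: "W y < W x \<longleftrightarrow> x < y"
    proof -
      have "int (W y) < int (W x) \<longleftrightarrow> int x < int y" using Wv[OF that(1)] Wv[OF that(2)] by linarith
      then show ?thesis by simp
    qed
    have o2: "W (z x) < W (z y) \<longleftrightarrow> z y < z x"
    proof -
      have "int (W (z x)) < int (W (z y)) \<longleftrightarrow> int (z y) < int (z x)" using Wv[OF zin[OF that(1)]] Wv[OF zin[OF that(2)]] by linarith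
      then show ?thesis by simp
    qed
    show ?thesis unfolding gF_def zz o1 o2 e[OF that(1)] e[OF that(2)] by simp
  qed
  have "Fz z' = (\<Sum>x\<in>{1..m}. \<Sum>y\<in>{1..m}. gF z' x y)" by (rule Fz_N[OF z'S z'm])
  also have "\<dots> = (\<Sum>x\<in>{1..m}. \<Sum>y\<in>{1..m}. gF z' (W x) (W y))"
  proof -
    have "(\<Sum>y\<in>{1..m}. gF z' x y) = (\<Sum>y\<in>{1..m}. gF z' x (W y))" for x
      using sum.reindex_bij_betw[OF bW, of "gF z' x"] by simp
    then have "(\<Sum>x\<in>{1..m}. \<Sum>y\<in>{1..m}. gF z' x y) = (\<Sum>x\<in>{1..m}. \<Sum>y\<in>{1..m}. gF z' x (W y))" by simp
    also have "\<dots> = (\<Sum>x\<in>{1..m}. \<Sum>y\<in>{1..m}. gF z' (W x) (W y))"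
      using sum.reindex_bij_betw[OF bW, of "\<lambda>x. \<Sum>y\<in>{1..m}. gF z' x (W y)"] by simp
    finally show ?thesis .
  qed
  also have "\<dots> = (\<Sum>y\<in>{1..m}. \<Sum>x\<in>{1..m}. gF z' (W x) (W y))" by (rule sum.swap)
  also have "\<dots> = (\<Sum>y\<in>{1..m}. \<Sum>x\<in>{1..m}. gF z y x)"
    by (intro sum.cong refl) (rule pt; simp)
  also have "\<dots> = Fz z" by (rule Fz_N[OF zS zm, symmetric])
  finally show ?thesis unfolding z'_def W_def .
qed

lemma Fz_fresh:
  assumes z: "z \<in> S_m m" and ab: "1 \<le> a" "a < b" "m < b"
  shows "Fz (transpose a b \<circ> z) \<ge> Fz z + 1"
proof -
  have zS: "z \<in> S_inf" and zm: "\<forall>i>m. z i = i" using Sm_D[OF z] by auto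
  define e where "e = transpose a b \<circ> z"
  have eS: "e \<in> S_inf" unfolding e_def using ab by (intro Sinf_comp Sinf_transpose zS) auto
  have zb: "\<forall>i>b. z i = i" using zm ab by auto
  have eb: "\<forall>i>b. e i = i" unfolding e_def using zb ab by (auto simp: transpose_def)
  have injz: "\<And>x y. z x = z y \<longleftrightarrow> x = y" using Sinf_inj[OF zS] .
  have bz: "bij_betw z {1..b} {1..b}" by (rule Sinf_bij_betw[OF zS zb])
  have zbb: "z b = b" using zm ab by auto
  define p where "p = inv z a"
  have zp: "z p = a" unfolding p_def using Sinf_inv_apply[OF zS] by auto
  have pA: "p \<in> {1..b}"
  proof -
    have "a \<in> {1..b}" using ab by auto
    then obtain q where "q \<in> {1..b}" "z q = a" using bz unfolding bij_betw_def by (metis imageE)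
    then show ?thesis using zp injz by metis
  qed
  have pb: "p \<noteq> b" using zp zbb ab by auto
  have ep: "e p = b" and ebb: "e b = a" unfolding e_def using zp zbb by (auto simp: transpose_def)
  have ec: "e c = z c" if "c \<noteq> p" "c \<noteq> b" for c
  proof -
    have "z c \<noteq> a" using that zp injz by metis
    moreover have "z c \<noteq> b" using that zbb injz by metis
    ultimately show ?thesis unfolding e_def by (auto simp: transpose_def)
  qed
  have A: "finite {1..b}" "p \<in> {1..b}" "b \<in> {1..b}" "p \<noteq> b" using pA pb ab by auto
  define S where "S = {1..b} - {p, b}"
  have same0: "gF e x y = gF z x y" if "x \<in> S" "y \<in> S" for x y
    using that ec[of x] ec[of y] unfolding S_def gF_def eps_def by auto
  have same: "(\<Sum>x\<in>S. \<Sum>y\<in>S. gF e x y) = (\<Sum>x\<in>S. \<Sum>y\<in>S. gF z x y)"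
    using same0 by (intro sum.cong refl) auto
  have delta: "gF e p c + gF e c p + gF e b c + gF e c b \<ge> gF z p c + gF z c p + gF z b c + gF z c b" if c: "c \<in> S" for c
  proof -
    have c1: "c \<noteq> p" "c \<noteq> b" "c < b" using c S_def by auto
    have zcb: "z c < b" "z c \<noteq> a"
    proof -
      have "z c \<in> {1..b}" using bz c S_def by (metis DiffD1 bij_betwE)
      moreover have "z c \<noteq> b" using zbb c1 injz by metis
      ultimately show "z c < b" by auto
      show "z c \<noteq> a" using zp c1 injz by metis
    qed
    have pb': "p < b" using pA pb by auto
    have ecc: "e c = z c" using ec c1 by auto
    have epc: "eps e c = eps z c" unfolding eps_def ecc ..
    have t1: "gF e p c = (if p < c then - eps z c else 0)"
      unfolding gF_def epc using ep ecc zcb pb' by (simp add: eps_def)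
    have t2: "gF e c p = 0" unfolding gF_def using ep ecc zcb by simp
    have t3: "gF e b c = 0" "gF z b c = 0" unfolding gF_def using c1 by auto
    have t4: "gF e c b = (if a < z c then eps z c else 0)"
      unfolding gF_def epc using ebb ecc c1 ab by (simp add: eps_def)
    have t5: "gF z c b = 0" unfolding gF_def using zbb zcb by simp
    have t6: "gF z p c = (if p < c \<and> z c < a then - (sgn (int a - int p) * eps z c) else 0)"
      unfolding gF_def using zp by (simp add: eps_def)
    have t7: "gF z c p = (if c < p \<and> a < z c then - (eps z c * sgn (int a - int p)) else 0)"
      unfolding gF_def using zp by (simp add: eps_def)
    have E: "eps z c = sgn (int (z c) - int c)" unfolding eps_def ..
    show ?thesis unfolding t1 t2 t3 t4 t5 t6 t7 E
      using c1 zcb by (cases "p < c"; cases "a < z c"; cases "z c < c"; cases "z c = c"; cases "a < p"; cases "a = p") (auto simp: sgn_if)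
  qed
  have diag: "gF e p p + gF e p b + gF e b p + gF e b b = gF z p p + gF z p b + gF z b p + gF z b b + 1"
  proof -
    have pb': "p < b" using pA pb by auto
    have "gF e p b = 1" unfolding gF_def eps_def ep ebb using pb' ab by simp
    moreover have "gF z p b = 0" unfolding gF_def zp zbb using ab by simp
    moreover have "gF e p p = 0" "gF z p p = 0" "gF e b b = 0" "gF z b b = 0" "gF e b p = 0" "gF z b p = 0"
      unfolding gF_def using pb' by auto
    ultimately show ?thesis by simp
  qed
  have "Fz e = (\<Sum>x\<in>{1..b}. \<Sum>y\<in>{1..b}. gF e x y)" by (rule Fz_N[OF eS eb])
  also have "\<dots> = (\<Sum>x\<in>S. \<Sum>y\<in>S. gF z x y) + (\<Sum>c\<in>S. gF e p c + gF e c p + gF e b c + gF e c b)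
       + gF e p p + gF e p b + gF e b p + gF e b b"
    unfolding pair_split[OF A] S_def[symmetric] same ..
  also have "\<dots> \<ge> (\<Sum>x\<in>S. \<Sum>y\<in>S. gF z x y) + (\<Sum>c\<in>S. gF z p c + gF z c p + gF z b c + gF z c b)
       + gF z p p + gF z p b + gF z b p + gF z b b + 1"
  proof -
    have "(\<Sum>c\<in>S. gF z p c + gF z c p + gF z b c + gF z c b) \<le> (\<Sum>c\<in>S. gF e p c + gF e c p + gF e b c + gF e c b)"
      by (rule sum_mono) (rule delta)
    then show ?thesis using diag by linarith
  qed
  also have "(\<Sum>x\<in>S. \<Sum>y\<in>S. gF z x y) + (\<Sum>c\<in>S. gF z p c + gF z c p + gF z b c + gF z c b)
       + gF z p p + gF z p b + gF z b p + gF z b b = (\<Sum>x\<in>{1..b}. \<Sum>y\<in>{1..b}. gF z x y)"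
    unfolding pair_split[OF A] S_def ..
  also have "\<dots> = Fz z" by (rule Fz_N[OF zS zb, symmetric])
  finally show ?thesis unfolding e_def by (simp add: comp_def)
qed



definition prodL :: "(nat \<times> nat) list \<Rightarrow> nat \<Rightarrow> nat" where
  "prodL xs = foldr (\<lambda>(a, b) f. transpose a b \<circ> f) xs id"

fun okL :: "(nat \<times> nat) list \<Rightarrow> bool" where
  "okL [] = True"
| "okL ((a, b) # xs) = (okL xs \<and> transpose a b \<circ> prodL xs \<in> S_inf \<and>
      ell_u (transpose a b \<circ> prodL xs) = ell_u (prodL xs) + 1)"

lemma prodL_simps[simp]: "prodL [] = id" "prodL ((a, b) # xs) = transpose a b \<circ> prodL xs"
  unfolding prodL_def by auto

lemma tt: "transpose a b \<circ> (transpose a b \<circ> f) = f"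
  by (auto simp: fun_eq_iff transpose_def)

lemma uhat_basis:
  "uhat a b (basis v) = (if transpose a b \<circ> v \<in> S_inf \<and> ell_u (transpose a b \<circ> v) = ell_u v + 1
      then basis (transpose a b \<circ> v) else (\<lambda>_. 0))"
proof (rule ext)
  fix w
  have iff: "transpose a b \<circ> w = v \<longleftrightarrow> w = transpose a b \<circ> v"
    using tt[of a b w] tt[of a b v] by metis
  show "uhat a b (basis v) w = (if transpose a b \<circ> v \<in> S_inf \<and> ell_u (transpose a b \<circ> v) = ell_u v + 1
      then basis (transpose a b \<circ> v) else (\<lambda>_. 0)) w"
  proof (cases "w = transpose a b \<circ> v")
    case True
    then have "transpose a b \<circ> w = v" using iff by simp
    then show ?thesis unfolding uhat_def basis_def using True by auto
  next
    case False
    then show ?thesis unfolding uhat_def basis_def using iff by auto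
  qed
qed

lemma uhat_zero: "uhat a b (\<lambda>_. 0) = (\<lambda>_. 0)"
  unfolding uhat_def by auto

lemma foldr_uhat:
  "foldr (\<lambda>(a, b) f. uhat a b f) xs (basis id) = (if okL xs then basis (prodL xs) else (\<lambda>_. 0))"
proof (induction xs)
  case Nil then show ?case by (simp add: id_def)
next
  case (Cons x xs)
  obtain a b where x: "x = (a, b)" by (cases x)
  show ?case using Cons unfolding x by (auto simp: uhat_basis uhat_zero comp_def)
qed

lemma basis_inj: "basis v = basis v' \<longleftrightarrow> v = v'"
  unfolding basis_def by (metis one_neq_zero)

lemma basis_nz: "basis v \<noteq> (\<lambda>_. 0)"
  unfolding basis_def by (metis one_neq_zero)

lemma basis_nz2: "(\<lambda>_. 0) \<noteq> basis v"
  using basis_nz by metis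

lemma R_u_iff: "xs \<in> R_u z \<longleftrightarrow> (\<forall>(a, b)\<in>set xs. 0 < a \<and> a < b) \<and> okL xs \<and> prodL xs = z"
  unfolding R_u_def foldr_uhat using basis_inj basis_nz basis_nz2 by auto

lemma prodL_S: "\<forall>(a, b)\<in>set xs. 0 < a \<and> a < b \<Longrightarrow> prodL xs \<in> S_inf"
proof (induction xs)
  case Nil then show ?case using bij_id unfolding S_inf_def by (simp add: id_def)
next
  case (Cons x xs)
  obtain a b where x: "x = (a, b)" by (cases x)
  have "prodL xs \<in> S_inf" "0 < a" "a < b" using Cons unfolding x by auto
  then have "transpose a b \<circ> prodL xs \<in> S_inf" by (intro Sinf_comp Sinf_transpose) auto
  then show ?case unfolding x by (simp add: comp_def)
qed

lemma w0_conj_t: "w0 m \<circ> transpose a b \<circ> w0 m = transpose (w0 m b) (w0 m a)"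
  by (auto simp: fun_eq_iff transpose_def w0_invol)

lemma w0_Sm: "z \<in> S_m m \<Longrightarrow> w0 m \<circ> z \<circ> w0 m \<in> S_m m"
  unfolding S_m_def using Sinf_comp w0_S by (auto simp: w0_def)

lemma t_Sm: "1 \<le> a \<Longrightarrow> a < b \<Longrightarrow> b \<le> m \<Longrightarrow> z \<in> S_m m \<Longrightarrow> transpose a b \<circ> z \<in> S_m m"
  unfolding S_m_def using Sinf_comp[OF Sinf_transpose] by (auto simp: transpose_def)

lemma main_ind:
  "\<forall>z. z \<in> S_m m \<longrightarrow> (\<forall>(a, b)\<in>set xs. 0 < a \<and> a < b) \<longrightarrow> okL xs \<longrightarrow> prodL xs = z \<longrightarrow>
     (\<forall>(a, b)\<in>set xs. b \<le> m) \<and> okL (map (\<lambda>(a, b). (w0 m b, w0 m a)) xs)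
     \<and> prodL (map (\<lambda>(a, b). (w0 m b, w0 m a)) xs) = w0 m \<circ> z \<circ> w0 m"
proof (induction xs)
  case Nil
  then show ?case by (auto simp: fun_eq_iff w0_invol)
next
  case (Cons x xs)
  obtain a b where x: "x = (a, b)" by (cases x)
  show ?case
  proof (intro allI impI)
    fix z assume zm: "z \<in> S_m m" and pos: "\<forall>(a, b)\<in>set (x # xs). 0 < a \<and> a < b"
      and ok: "okL (x # xs)" and pz: "prodL (x # xs) = z"
    define P where "P = prodL xs"
    have ab: "1 \<le> a" "a < b" using pos x by auto
    have posxs: "\<forall>(a, b)\<in>set xs. 0 < a \<and> a < b" using pos by auto
    have PS: "P \<in> S_inf" unfolding P_def using prodL_S[OF posxs] .
    have zS: "z \<in> S_inf" using Sm_D[OF zm] by auto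
    have zt: "z = transpose a b \<circ> P" using pz x P_def by simp
    have okxs: "okL xs" and ell1: "ell_u z = ell_u P + 1" using ok x zt P_def by auto
    have F1: "Fz z = Fz P + 1" using ell1 ell_eq[OF zS] ell_eq[OF PS] by simp
    have Pz: "P = transpose a b \<circ> z" using zt tt by metis
    have bm: "b \<le> m"
    proof (rule ccontr)
      assume "\<not> b \<le> m"
      then have "Fz P \<ge> Fz z + 1" using Fz_fresh[OF zm ab] Pz by auto
      then show False using F1 by simp
    qed
    have Pm: "P \<in> S_m m" using t_Sm[OF ab bm zm] Pz by simp
    have IH: "(\<forall>(a, b)\<in>set xs. b \<le> m) \<and> okL (map (\<lambda>(a, b). (w0 m b, w0 m a)) xs)
       \<and> prodL (map (\<lambda>(a, b). (w0 m b, w0 m a)) xs) = w0 m \<circ> P \<circ> w0 m"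
      using Cons.IH Pm posxs okxs P_def by blast
    have conj: "transpose (w0 m b) (w0 m a) \<circ> (w0 m \<circ> P \<circ> w0 m) = w0 m \<circ> z \<circ> w0 m"
      unfolding w0_conj_t[symmetric] zt by (auto simp: fun_eq_iff w0_invol)
    have zWS: "w0 m \<circ> z \<circ> w0 m \<in> S_inf" using Sm_D[OF w0_Sm[OF zm]] by auto
    have PWS: "w0 m \<circ> P \<circ> w0 m \<in> S_inf" using Sm_D[OF w0_Sm[OF Pm]] by auto
    have ell2: "ell_u (w0 m \<circ> z \<circ> w0 m) = ell_u (w0 m \<circ> P \<circ> w0 m) + 1"
      using ell_eq[OF zWS] ell_eq[OF PWS] Fz_w0[OF zm] Fz_w0[OF Pm] F1 by simp
    show "(\<forall>(a, b)\<in>set (x # xs). b \<le> m) \<and> okL (map (\<lambda>(a, b). (w0 m b, w0 m a)) (x # xs))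
       \<and> prodL (map (\<lambda>(a, b). (w0 m b, w0 m a)) (x # xs)) = w0 m \<circ> z \<circ> w0 m"
      using IH bm conj zWS ell2 unfolding x by simp
  qed
qed

theorem mainTheorem6:
  fixes m :: nat and \<zeta> :: "nat \<Rightarrow> nat"
  assumes "1 \<le> m" and "\<zeta> \<in> S_m m"
  shows "bij_betw (map (\<lambda>(a, b). (w0 m b, w0 m a)))
           (R_u \<zeta>) (R_u (w0 m \<circ> \<zeta> \<circ> w0 m))"
proof -
  define f where "f = map (\<lambda>(a::nat, b::nat). (w0 m b, w0 m a))"
  have ff: "f (f xs) = xs" for xs unfolding f_def by (induction xs) (auto simp: w0_invol)
  have into: "f xs \<in> R_u (w0 m \<circ> z \<circ> w0 m)" if z: "z \<in> S_m m" and xs: "xs \<in> R_u z" for z xs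
  proof -
    have h: "(\<forall>(a, b)\<in>set xs. 0 < a \<and> a < b)" "okL xs" "prodL xs = z" using xs R_u_iff by auto
    have r: "(\<forall>(a, b)\<in>set xs. b \<le> m) \<and> okL (f xs) \<and> prodL (f xs) = w0 m \<circ> z \<circ> w0 m"
      using main_ind[of m xs] z h unfolding f_def by blast
    have "\<forall>(a, b)\<in>set (f xs). 0 < a \<and> a < b"
    proof
      fix p assume "p \<in> set (f xs)"
      then obtain a b where "(a, b) \<in> set xs" "p = (w0 m b, w0 m a)" unfolding f_def by auto
      then have "0 < a" "a < b" "b \<le> m" using h r by auto
      then show "case p of (a, b) \<Rightarrow> 0 < a \<and> a < b" using \<open>p = _\<close> unfolding w0_def by auto
    qed
    then show ?thesis using r R_u_iff by auto
  qed
  have z2: "w0 m \<circ> (w0 m \<circ> \<zeta> \<circ> w0 m) \<circ> w0 m = \<zeta>" by (auto simp: fun_eq_iff w0_invol)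
  show ?thesis unfolding f_def[symmetric]
  proof (rule bij_betw_byWitness[where f' = f])
    show "\<forall>a\<in>R_u \<zeta>. f (f a) = a" using ff by auto
    show "\<forall>a'\<in>R_u (w0 m \<circ> \<zeta> \<circ> w0 m). f (f a') = a'" using ff by auto
    show "f ` R_u \<zeta> \<subseteq> R_u (w0 m \<circ> \<zeta> \<circ> w0 m)" using into[OF assms(2)] by auto
    show "f ` R_u (w0 m \<circ> \<zeta> \<circ> w0 m) \<subseteq> R_u \<zeta>" using into[OF w0_Sm[OF assms(2)]] z2 by auto
  qed
qed

end
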